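(* For $n\ge 0$ let $s_n$ be the number of permutations of $\{1,\dots,n\}$ that are achievable by two stacks in series, and let $t_n$ be the number of achievable permutations $a_1\cdots a_n$ of $\{1,\dots,n\}$ for which there is no $j$ with $a_{j+1}=a_j+1$ (with $s_0=t_0=1$). Let $S(x)=\sum_{n\ge0}s_nx^n$ and $T(x)=\sum_{n\ge0}t_nx^n$. Then $S(x)=T\!\left(\frac{x}{1-x}\right)$, and consequently for every $n\ge1$, $$s_n=\sum_{i=1}^{n}\binom{n-1}{i-1}t_i.$$
   Context: Two stacks in series: a machine with an input stream, a first stack, a second stack and an output stream, with three moves: $\rho$ moves the next element of the input onto the top of the first stack; $\lambda$ moves the top element of the first stack onto the top of the second stack; $\mu$ moves the top element of the second stack to the end of the output. A permutation $q$ of $\{1,\dots,m\}$ is achievable if, starting with input $1,2,\dots,m$ (in this order) and both stacks empty, some finite sequence of these moves ends with empty input, empty stacks, and output equal to $q$. *)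

theory Defs
  imports "HOL-Computational_Algebra.Formal_Power_Series"
begin

text \<open>Configuration of the machine: (input, first stack, second stack, output).
  Stacks are lists whose head is the top element; the output list grows at the end.\<close>
type_synonym config = "nat list \<times> nat list \<times> nat list \<times> nat list"

inductive move :: "config \<Rightarrow> config \<Rightarrow> bool" where
  rho: "move (x # inp, st1, st2, out) (inp, x # st1, st2, out)"
| lambda: "move (inp, y # st1, st2, out) (inp, st1, y # st2, out)"
| mu: "move (inp, st1, z # st2, out) (inp, st1, st2, out @ [z])"

definition achievable :: "nat \<Rightarrow> nat list \<Rightarrow> bool" where
  "achievable m q \<longleftrightarrow> move\<^sup>*\<^sup>* ([1..<m+1], [], [], []) ([], [], [], q)"

definition is_perm :: "nat \<Rightarrow> nat list \<Rightarrow> bool" where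
  "is_perm n q \<longleftrightarrow> distinct q \<and> set q = {1..n}"

definition s_count :: "nat \<Rightarrow> nat" where
  "s_count n = card {q. is_perm n q \<and> achievable n q}"

definition t_count :: "nat \<Rightarrow> nat" where
  "t_count n = card {q. is_perm n q \<and> achievable n q \<and>
      \<not> (\<exists>j. j + 1 < length q \<and> q ! (j + 1) = q ! j + 1)}"

definition S_fps :: "rat fps" where
  "S_fps = Abs_fps (\<lambda>n. of_nat (s_count n))"

definition T_fps :: "rat fps" where
  "T_fps = Abs_fps (\<lambda>n. of_nat (t_count n))"

end

theory Submission
  imports Defs "HOL-Library.Multiset"
begin



lemma push_all: "move\<^sup>*\<^sup>* (L @ I, S1, S2, Ou) (I, rev L @ S1, S2, Ou)"
proof (induction L arbitrary: S1)
  case Nil then show ?case by simp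
next
  case (Cons a L)
  have "move (a # L @ I, S1, S2, Ou) (L @ I, a # S1, S2, Ou)" by (rule move.rho)
  with Cons[of "a # S1"] show ?case by (simp add: converse_rtranclp_into_rtranclp)
qed

lemma lam_all: "move\<^sup>*\<^sup>* (I, rev L @ S1, S2, Ou) (I, S1, L @ S2, Ou)"
proof (induction L arbitrary: S1 S2)
  case Nil then show ?case by simp
next
  case (Cons a L)
  have "move (I, a # S1, L @ S2, Ou) (I, S1, a # L @ S2, Ou)" by (rule move.lambda)
  with Cons[of "a # S1" S2] show ?case by (simp add: rtranclp.rtrancl_into_rtrancl)
qed

lemma mu_all: "move\<^sup>*\<^sup>* (I, S1, L @ S2, Ou) (I, S1, S2, Ou @ L)"
proof (induction L arbitrary: Ou)
  case Nil then show ?case by simp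
next
  case (Cons a L)
  have "move (I, S1, a # L @ S2, Ou) (I, S1, L @ S2, Ou @ [a])" by (rule move.mu)
  with Cons[of "Ou @ [a]"] show ?case by (simp add: converse_rtranclp_into_rtranclp)
qed

definition Phi :: "(nat \<Rightarrow> nat list) \<Rightarrow> config \<Rightarrow> config" where
  "Phi g c = (case c of (I, S1, S2, Ou) \<Rightarrow>
     (concat (map g I), concat (map (rev \<circ> g) S1), concat (map g S2), concat (map g Ou)))"

lemma move_Phi: "move c c' \<Longrightarrow> move\<^sup>*\<^sup>* (Phi g c) (Phi g c')"
proof (induction rule: move.induct)
  case (rho x inp st1 st2 out)
  show ?case using push_all[of "g x"] by (simp add: Phi_def)
next
  case (lambda inp y st1 st2 out)
  show ?case using lam_all[of _ "g y"] by (simp add: Phi_def)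
next
  case (mu inp st1 z st2 out)
  show ?case using mu_all[of _ _ "g z"] by (simp add: Phi_def)
qed

lemma star_Phi: "move\<^sup>*\<^sup>* c c' \<Longrightarrow> move\<^sup>*\<^sup>* (Phi g c) (Phi g c')"
  by (induction rule: rtranclp_induct) (auto intro: rtranclp_trans move_Phi)

lemma achievable_subst:
  assumes "achievable m q" "concat (map g [1..<m+1]) = [1..<n+1]"
  shows "achievable n (concat (map g q))"
  using star_Phi[OF assms(1)[unfolded achievable_def], of g] assms(2)
  by (simp add: Phi_def achievable_def)




fun gl :: "nat list \<Rightarrow> nat set" where
  "gl [] = {}"
| "gl [x] = {}"
| "gl (x # y # r) = (if y = Suc x then {x} else {}) \<union> gl (y # r)"

lemma gl_Cons: "gl (x # ys) = (if ys \<noteq> [] \<and> hd ys = Suc x then {x} else {}) \<union> gl ys"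
  by (cases ys) auto

lemma gl_append: "gl (xs @ ys) = gl xs \<union> gl ys \<union>
   (if xs \<noteq> [] \<and> ys \<noteq> [] \<and> hd ys = Suc (last xs) then {last xs} else {})"
  by (induction xs) (auto simp: gl_Cons)

lemma gl_decomp: "a \<in> gl q \<longleftrightarrow> (\<exists>xs ys. q = xs @ a # Suc a # ys)"
proof
  assume "a \<in> gl q" then show "\<exists>xs ys. q = xs @ a # Suc a # ys"
  proof (induction q rule: gl.induct)
    case (3 x y r)
    show ?case
    proof (cases "a \<in> gl (y # r)")
      case True
      then obtain xs ys where "y # r = xs @ a # Suc a # ys" using 3(1) by blast
      then show ?thesis by (metis append_Cons)
    next
      case False
      then have "a = x" "y = Suc x" using 3(2) by (auto split: if_splits)
      then show ?thesis by (metis append_Nil)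
    qed
  qed auto
next
  assume "\<exists>xs ys. q = xs @ a # Suc a # ys"
  then show "a \<in> gl q" by (auto simp: gl_append gl_Cons)
qed

lemma gl_set: "a \<in> gl q \<Longrightarrow> a \<in> set q \<and> Suc a \<in> set q"
  by (auto simp: gl_decomp)

lemma gl_nth: "gl q = {} \<longleftrightarrow> \<not> (\<exists>j. j + 1 < length q \<and> q ! (j + 1) = q ! j + 1)"
proof -
  have "(\<exists>a. a \<in> gl q) \<longleftrightarrow> (\<exists>j. j + 1 < length q \<and> q ! (j + 1) = q ! j + 1)"
  proof
    assume "\<exists>a. a \<in> gl q"
    then obtain a xs ys where q: "q = xs @ a # Suc a # ys" by (auto simp: gl_decomp)
    show "\<exists>j. j + 1 < length q \<and> q ! (j + 1) = q ! j + 1"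
      by (rule exI[of _ "length xs"]) (simp add: q nth_append)
  next
    assume "\<exists>j. j + 1 < length q \<and> q ! (j + 1) = q ! j + 1"
    then obtain j where j: "j + 1 < length q" "q ! (j + 1) = q ! j + 1" by blast
    have "q = take j q @ q ! j # q ! Suc j # drop (Suc (Suc j)) q"
      using j(1) by (metis Cons_nth_drop_Suc Suc_eq_plus1 Suc_lessD append_take_drop_id)
    then have "q ! j \<in> gl q" using j(2) by (metis Suc_eq_plus1 gl_decomp)
    then show "\<exists>a. a \<in> gl q" by blast
  qed
  then show ?thesis by blast
qed

definition sh :: "nat \<Rightarrow> nat \<Rightarrow> nat" where "sh v x = (if x > v then x - 1 else x)"
definition gi :: "nat \<Rightarrow> nat \<Rightarrow> nat list" where
  "gi v x = (if x = v then [v, Suc v] else if x > v then [Suc x] else [x])"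
definition gd :: "nat \<Rightarrow> nat \<Rightarrow> nat list" where
  "gd v x = (if x = Suc v then [] else [sh v x])"
definition ins :: "nat \<Rightarrow> nat list \<Rightarrow> nat list" where "ins v L = concat (map (gi v) L)"
definition del :: "nat \<Rightarrow> nat list \<Rightarrow> nat list" where "del v L = concat (map (gd v) L)"

lemma del_ins: "del v (ins v L) = L"
  by (induction L) (auto simp: del_def ins_def gi_def gd_def sh_def)

lemma del_alt: "del v L = map (sh v) (filter (\<lambda>x. x \<noteq> Suc v) L)"
  by (induction L) (auto simp: del_def gd_def)

lemma concat_single: "(\<forall>x\<in>set L. g x = [x]) \<Longrightarrow> concat (map g L) = L"
  by (induction L) auto

lemma concat_single': "(\<forall>x\<in>set L. g x = [f x]) \<Longrightarrow> concat (map g L) = map f L"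
  by (induction L) auto

lemma ins_upt: assumes "1 \<le> v" "v < n" shows "ins v [1..<n] = [1..<n+1]"
proof -
  have u: "[1..<n] = [1..<v] @ v # [Suc v..<n]"
  proof -
    obtain k where k: "n = v + k" using assms by (metis less_imp_add_positive)
    show ?thesis using assms upt_add_eq_append[of 1 v k] upt_conv_Cons[of v n] k by simp
  qed
  have u2: "[1..<n+1] = [1..<v] @ v # Suc v # [Suc (Suc v)..<n+1]"
  proof -
    obtain k where k: "n + 1 = v + k" using assms by (metis less_imp_add_positive less_SucI Suc_eq_plus1)
    have k2: "k \<ge> 2" using k assms by simp
    have "[v..<v+k] = v # Suc v # [Suc (Suc v)..<v+k]" using k2 by (simp add: upt_conv_Cons)
    then show ?thesis using assms upt_add_eq_append[of 1 v k] k by simp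
  qed
  have a: "concat (map (gi v) [1..<v]) = [1..<v]"
    by (rule concat_single) (auto simp: gi_def)
  have b: "concat (map (gi v) [Suc v..<n]) = map Suc [Suc v..<n]"
    by (rule concat_single') (auto simp: gi_def)
  show ?thesis unfolding ins_def u u2 using a b by (simp add: gi_def map_Suc_upt)
qed

lemma del_upt: assumes "1 \<le> v" "v < n" shows "del v [1..<n+1] = [1..<n]"
  using ins_upt[OF assms] del_ins by metis

lemma mset_concat_map: "mset (concat (map g xs)) = \<Sum>\<^sub># (image_mset (mset \<circ> g) (mset xs))"
  by (induction xs) auto

lemma set_upt1: "set [1..<n+1] = {1..n}" unfolding set_upt by auto

lemma is_perm_mset: "is_perm n q \<longleftrightarrow> mset q = mset [1..<n+1]"
proof
  assume a: "is_perm n q"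
  have "set q = set [1..<n+1]" using a unfolding is_perm_def set_upt1 by simp
  moreover have "distinct q" using a unfolding is_perm_def by simp
  ultimately show "mset q = mset [1..<n+1]"
    using set_eq_iff_mset_eq_distinct[of q "[1..<n+1]"] distinct_upt by blast
next
  assume m: "mset q = mset [1..<n+1]"
  then have "distinct q" using mset_eq_imp_distinct_iff[OF m] distinct_upt by blast
  moreover have "set q = set [1..<n+1]" using m by (metis set_mset_mset)
  moreover have "set [1..<n+1] = {1..n}" by (rule set_upt1)
  ultimately show "is_perm n q" by (simp add: is_perm_def)
qed

lemma perm_subst: "is_perm m q \<Longrightarrow> concat (map g [1..<m+1]) = [1..<n+1] \<Longrightarrow> is_perm n (concat (map g q))"
  unfolding is_perm_mset by (metis mset_concat_map)




lemma del_decomp: "x \<noteq> v \<Longrightarrow> x \<noteq> Suc v \<Longrightarrow> ins v (del v [x]) = [x]"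
  by (auto simp: ins_def del_def gd_def gi_def sh_def)

lemma ins_del_avoid: "\<forall>x\<in>set L. x \<noteq> v \<and> x \<noteq> Suc v \<Longrightarrow> ins v (del v L) = L"
  by (induction L) (auto simp: ins_def del_def gd_def gi_def sh_def)

lemma del_append: "del v (xs @ ys) = del v xs @ del v ys"
  by (simp add: del_def)
lemma ins_append: "ins v (xs @ ys) = ins v xs @ ins v ys"
  by (simp add: ins_def)

lemma decomp_distinct:
  assumes "distinct q" "v \<in> gl q"
  obtains xs ys where "q = xs @ v # Suc v # ys" "\<forall>x\<in>set xs. x \<noteq> v \<and> x \<noteq> Suc v"
     "\<forall>x\<in>set ys. x \<noteq> v \<and> x \<noteq> Suc v"
proof -
  obtain xs ys where q: "q = xs @ v # Suc v # ys" using assms(2) gl_decomp by blast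
  then show ?thesis using that assms(1) by auto
qed

lemma ins_del: assumes "distinct q" "v \<in> gl q" shows "ins v (del v q) = q"
proof -
  obtain xs ys where q: "q = xs @ v # Suc v # ys" and a: "\<forall>x\<in>set xs. x \<noteq> v \<and> x \<noteq> Suc v"
     "\<forall>x\<in>set ys. x \<noteq> v \<and> x \<noteq> Suc v" using decomp_distinct[OF assms] by blast
  have "del v q = del v xs @ [v] @ del v ys" by (simp add: q del_def gd_def sh_def)
  then have "ins v (del v q) = ins v (del v xs) @ [v, Suc v] @ ins v (del v ys)"
    by (simp add: ins_append ins_def gi_def)
  then show ?thesis using ins_del_avoid a q by simp
qed

lemma sh_succ: "x \<noteq> v \<Longrightarrow> x \<noteq> Suc v \<Longrightarrow> y \<noteq> v \<Longrightarrow> y \<noteq> Suc v \<Longrightarrow>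
   (sh v y = Suc (sh v x)) \<longleftrightarrow> y = Suc x"
  by (auto simp: sh_def)

lemma gl_map: "\<forall>x\<in>set L. x \<noteq> v \<and> x \<noteq> Suc v \<Longrightarrow> gl (map (sh v) L) = sh v ` gl L"
proof (induction L)
  case Nil then show ?case by simp
next
  case (Cons a L)
  have "L \<noteq> [] \<Longrightarrow> (hd (map (sh v) L) = Suc (sh v a)) = (hd L = Suc a)"
    using Cons.prems by (cases L) (auto simp: sh_succ)
  then show ?case using Cons by (auto simp: gl_Cons)
qed

lemma gl_subset_set: "gl q \<subseteq> set q" using gl_set by blast

lemma del_avoid: "\<forall>x\<in>set L. x \<noteq> v \<and> x \<noteq> Suc v \<Longrightarrow> del v L = map (sh v) L"
  by (induction L) (auto simp: del_def gd_def)

lemma gl_del: assumes "distinct q" "v \<in> gl q" shows "gl (del v q) = sh v ` (gl q - {v})"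
proof -
  obtain xs ys where q: "q = xs @ v # Suc v # ys" and a: "\<forall>x\<in>set xs. x \<noteq> v \<and> x \<noteq> Suc v"
     "\<forall>x\<in>set ys. x \<noteq> v \<and> x \<noteq> Suc v" using decomp_distinct[OF assms] by blast
  have d: "del v q = map (sh v) xs @ v # map (sh v) ys"
    using del_avoid[OF a(1)] del_avoid[OF a(2)] by (simp add: q del_append del_def gd_def sh_def)
  have vx: "v \<notin> gl xs" "v \<notin> gl ys" "Suc v \<notin> gl xs" using a gl_subset_set by blast+
  have lx: "xs \<noteq> [] \<Longrightarrow> last xs \<noteq> v \<and> last xs \<noteq> Suc v" using a(1) by auto
  have hy: "ys \<noteq> [] \<Longrightarrow> hd ys \<noteq> v \<and> hd ys \<noteq> Suc v" using a(2) by auto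
  have e1: "xs \<noteq> [] \<Longrightarrow> (v = Suc (sh v (last xs))) = (v = Suc (last xs))"
    using lx by (auto simp: sh_def)
  have e1': "xs \<noteq> [] \<Longrightarrow> v = Suc (last xs) \<Longrightarrow> sh v (last xs) = last xs"
    by (auto simp: sh_def)
  have e2: "ys \<noteq> [] \<Longrightarrow> (sh v (hd ys) = Suc v) = (hd ys = Suc (Suc v))"
    using hy by (auto simp: sh_def)
  have lhs: "gl (del v q) = sh v ` gl xs \<union> sh v ` gl ys
      \<union> (if xs \<noteq> [] \<and> v = Suc (last xs) then {last xs} else {})
      \<union> (if ys \<noteq> [] \<and> hd ys = Suc (Suc v) then {v} else {})"
    unfolding d gl_append gl_Cons gl_map[OF a(1)] gl_map[OF a(2)]
    using e1 e1' e2 by (auto simp: last_map hd_map)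
  have rhs: "gl q = gl xs \<union> gl ys \<union> {v}
      \<union> (if xs \<noteq> [] \<and> v = Suc (last xs) then {last xs} else {})
      \<union> (if ys \<noteq> [] \<and> hd ys = Suc (Suc v) then {Suc v} else {})"
    unfolding q gl_append gl_Cons by auto
  have ne: "xs \<noteq> [] \<Longrightarrow> v = Suc (last xs) \<Longrightarrow> last xs \<noteq> v" by simp
  have s1: "sh v (Suc v) = v" by (simp add: sh_def)
  have s2: "xs \<noteq> [] \<Longrightarrow> v = Suc (last xs) \<Longrightarrow> sh v (last xs) = last xs" by (simp add: sh_def)
  show ?thesis unfolding lhs rhs using vx s1 s2 by (auto split: if_splits)
qed

lemma gl_ins: "v \<in> set L \<Longrightarrow> v \<in> gl (ins v L)"
proof -
  assume "v \<in> set L"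
  then obtain xs ys where L: "L = xs @ v # ys" by (meson split_list)
  have "ins v L = ins v xs @ v # Suc v # ins v ys" by (simp add: L ins_def gi_def)
  then show ?thesis using gl_decomp by blast
qed

lemma inj_sh: "inj_on (sh v) (- {v})"
  by (auto simp: inj_on_def sh_def split: if_splits)




definition Aset :: "nat \<Rightarrow> nat list set" where
  "Aset n = {q. is_perm n q \<and> achievable n q}"

lemma finite_Aset: "finite (Aset n)"
proof -
  have "Aset n \<subseteq> {q. set q \<subseteq> {1..n} \<and> length q = n}"
  proof
    fix q assume "q \<in> Aset n"
    then have "distinct q" "set q = {1..n}" unfolding Aset_def is_perm_def by auto
    then have "length q = n" using distinct_card[of q] by simp
    then show "q \<in> {q. set q \<subseteq> {1..n} \<and> length q = n}" using \<open>set q = {1..n}\<close> by simp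
  qed
  moreover have "finite {q. set q \<subseteq> {1..n} \<and> length q = n}"
    by (rule finite_lists_length_eq) simp
  ultimately show ?thesis by (rule finite_subset)
qed

lemma A_del: assumes "q \<in> Aset n" "1 \<le> v" "v < n" shows "del v q \<in> Aset (n - 1)"
proof -
  have u: "concat (map (gd v) [1..<n+1]) = [1..<(n-1)+1]"
    using del_upt[OF assms(2,3)] assms by (simp add: del_def)
  show ?thesis using assms(1) achievable_subst[OF _ u] perm_subst[OF _ u]
    by (simp add: Aset_def del_def)
qed

lemma A_ins: assumes "q \<in> Aset (n - 1)" "1 \<le> v" "v < n" shows "ins v q \<in> Aset n"
proof -
  have u: "concat (map (gi v) [1..<(n-1)+1]) = [1..<n+1]"
    using ins_upt[OF assms(2,3)] assms by (simp add: ins_def)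
  show ?thesis using assms(1) achievable_subst[OF _ u] perm_subst[OF _ u]
    by (simp add: Aset_def ins_def)
qed

lemma A_distinct: "q \<in> Aset n \<Longrightarrow> distinct q" by (simp add: Aset_def is_perm_def)
lemma A_set: "q \<in> Aset n \<Longrightarrow> set q = {1..n}" by (simp add: Aset_def is_perm_def)

lemma gl_A: "q \<in> Aset n \<Longrightarrow> gl q \<subseteq> {1..<n}"
proof
  fix a assume "q \<in> Aset n" "a \<in> gl q"
  then have "a \<in> {1..n}" "Suc a \<in> {1..n}" using gl_set A_set by blast+
  then show "a \<in> {1..<n}" by auto
qed

lemma t_count_A: "t_count n = card {q \<in> Aset n. gl q = {}}"
  unfolding t_count_def Aset_def by (rule arg_cong[where f=card], rule Collect_cong, subst gl_nth, simp)



lemma count_G: "finite G \<Longrightarrow> G \<subseteq> {1..<n} \<Longrightarrow> card {q \<in> Aset n. gl q = G} = t_count (n - card G)"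
proof (induction "card G" arbitrary: n G)
  case 0
  then have "G = {}" by simp
  then show ?case by (simp add: t_count_A)
next
  case (Suc k)
  then have "G \<noteq> {}" by auto
  then obtain v where v: "v \<in> G" by blast
  have v1: "1 \<le> v" "v < n" using v Suc.prems by auto
  define G' where "G' = sh v ` (G - {v})"
  have inj: "inj_on (sh v) (G - {v})" using inj_sh by (rule inj_on_subset) auto
  have cG': "card G' = k" unfolding G'_def using card_image[OF inj] Suc.hyps(2) Suc.prems v by simp
  have fG': "finite G'" unfolding G'_def using Suc.prems by simp
  have sG': "G' \<subseteq> {1..<n-1}"
  proof
    fix y assume "y \<in> G'"
    then obtain g where g: "g \<in> G" "g \<noteq> v" "y = sh v g" unfolding G'_def by auto
    then show "y \<in> {1..<n-1}" using Suc.prems v1 by (auto simp: sh_def)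
  qed
  have IH: "card {q \<in> Aset (n-1). gl q = G'} = t_count (n - 1 - k)"
    using Suc.hyps(1)[OF cG'[symmetric] fG' sG'] cG' by simp
  have bij: "bij_betw (del v) {q \<in> Aset n. gl q = G} {q \<in> Aset (n-1). gl q = G'}"
  proof (rule bij_betw_imageI)
    show "inj_on (del v) {q \<in> Aset n. gl q = G}"
    proof (rule inj_onI)
      fix x y assume x: "x \<in> {q \<in> Aset n. gl q = G}" and y: "y \<in> {q \<in> Aset n. gl q = G}"
        and e: "del v x = del v y"
      have "x = ins v (del v x)" using x v A_distinct ins_del by auto
      also have "\<dots> = ins v (del v y)" using e by simp
      also have "\<dots> = y" using y v A_distinct ins_del by auto
      finally show "x = y" .
    qed
    show "del v ` {q \<in> Aset n. gl q = G} = {q \<in> Aset (n-1). gl q = G'}"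
    proof
      show "del v ` {q \<in> Aset n. gl q = G} \<subseteq> {q \<in> Aset (n-1). gl q = G'}"
      proof
        fix y assume "y \<in> del v ` {q \<in> Aset n. gl q = G}"
        then obtain x where x: "x \<in> Aset n" "gl x = G" "y = del v x" by blast
        have "y \<in> Aset (n-1)" using A_del[OF x(1) v1] x(3) by simp
        moreover have "gl y = G'" using gl_del[OF A_distinct[OF x(1)]] x v unfolding G'_def by simp
        ultimately show "y \<in> {q \<in> Aset (n-1). gl q = G'}" by simp
      qed
    next
      show "{q \<in> Aset (n-1). gl q = G'} \<subseteq> del v ` {q \<in> Aset n. gl q = G}"
      proof
        fix q' assume q': "q' \<in> {q \<in> Aset (n-1). gl q = G'}"
        define q where "q = ins v q'"
        have qA: "q \<in> Aset n" using q' A_ins v1 unfolding q_def by auto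
        have vq': "v \<in> set q'" using q' A_set v1 by auto
        have vq: "v \<in> gl q" unfolding q_def by (rule gl_ins[OF vq'])
        have dq: "del v q = q'" unfolding q_def by (rule del_ins)
        have "sh v ` (gl q - {v}) = sh v ` (G - {v})"
          using gl_del[OF A_distinct[OF qA] vq] dq q' unfolding G'_def by simp
        then have "gl q - {v} = G - {v}"
          using inj_on_image_eq_iff[OF inj_sh, of "gl q - {v}" v "G - {v}"] by blast
        then have "gl q = G" using vq v by blast
        then show "q' \<in> del v ` {q \<in> Aset n. gl q = G}" using qA dq by blast
      qed
    qed
  qed
  have "card {q \<in> Aset n. gl q = G} = card {q \<in> Aset (n-1). gl q = G'}"
    by (rule bij_betw_same_card[OF bij])
  then show ?case using IH Suc.hyps(2) by simp
qed



lemma s_count_sum: "s_count n = (\<Sum>G\<in>Pow {1..<n}. t_count (n - card G))"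
proof -
  have eq: "Aset n = (\<Union>G\<in>Pow {1..<n}. {q \<in> Aset n. gl q = G})" using gl_A by blast
  have "s_count n = card (Aset n)" by (simp add: s_count_def Aset_def)
  also have "\<dots> = (\<Sum>G\<in>Pow {1..<n}. card {q \<in> Aset n. gl q = G})"
    by (subst eq, rule card_UN_disjoint) (auto simp: finite_Aset)
  also have "\<dots> = (\<Sum>G\<in>Pow {1..<n}. t_count (n - card G))"
  proof (rule sum.cong)
    fix G assume "G \<in> Pow {1..<n}"
    then have "G \<subseteq> {1..<n}" "finite G" using finite_subset by auto
    then show "card {q \<in> Aset n. gl q = G} = t_count (n - card G)" by (rule count_G[rotated])
  qed simp
  finally show ?thesis .
qed

lemma sum_pow_card:
  assumes "finite S"
  shows "(\<Sum>G\<in>Pow S. f (card G)) = (\<Sum>k\<le>card S. (card S choose k) * f k)"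
proof -
  have eq: "Pow S = (\<Union>k\<in>{..card S}. {G. G \<subseteq> S \<and> card G = k})"
  proof
    show "Pow S \<subseteq> (\<Union>k\<in>{..card S}. {G. G \<subseteq> S \<and> card G = k})"
    proof
      fix G assume "G \<in> Pow S"
      then have "G \<subseteq> S" "card G \<le> card S" using card_mono[OF assms] by auto
      then show "G \<in> (\<Union>k\<in>{..card S}. {G. G \<subseteq> S \<and> card G = k})" by blast
    qed
  qed blast
  have "(\<Sum>G\<in>Pow S. f (card G)) = (\<Sum>k\<le>card S. \<Sum>G\<in>{G. G \<subseteq> S \<and> card G = k}. f (card G))"
  proof -
    have fin: "\<forall>k\<in>{..card S}. finite {G. G \<subseteq> S \<and> card G = k}"
    proof
      fix k show "finite {G. G \<subseteq> S \<and> card G = k}"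
        by (rule finite_subset[of _ "Pow S"]) (auto simp: assms)
    qed
    have dis: "\<forall>i\<in>{..card S}. \<forall>j\<in>{..card S}. i \<noteq> j \<longrightarrow>
       {G. G \<subseteq> S \<and> card G = i} \<inter> {G. G \<subseteq> S \<and> card G = j} = {}" by blast
    show ?thesis by (subst eq, rule sum.UNION_disjoint[OF _ fin dis]) simp
  qed
  also have "\<dots> = (\<Sum>k\<le>card S. \<Sum>G\<in>{G. G \<subseteq> S \<and> card G = k}. f k)"
    by (rule sum.cong) auto
  also have "\<dots> = (\<Sum>k\<le>card S. (card S choose k) * f k)"
    using n_subsets[OF assms] by simp
  finally show ?thesis .
qed



unbundle fps_syntax

lemma s_count_binom: assumes "n \<ge> 1"
  shows "s_count n = (\<Sum>i=1..n. ((n - 1) choose (i - 1)) * t_count i)"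
proof -
  have "s_count n = (\<Sum>k\<le>n-1. ((n-1) choose k) * t_count (n - k))"
    using s_count_sum[of n] sum_pow_card[of "{1..<n}" "\<lambda>c. t_count (n - c)"] by simp
  also have "\<dots> = (\<Sum>i=1..n. ((n - 1) choose (i - 1)) * t_count i)"
  proof (rule sum.reindex_bij_witness[of _ "\<lambda>i. n - i" "\<lambda>k. n - k"])
    fix k assume k: "k \<in> {..n-1}"
    then show "n - (n - k) = k" "n - k \<in> {1..n}" using assms by auto
    have "(n-1) choose k = (n-1) choose (n - 1 - k)" using k by (simp add: binomial_symmetric)
    moreover have "n - k - 1 = n - 1 - k" by simp
    ultimately show "((n - 1) choose (n - k - 1)) * t_count (n - k) = ((n-1) choose k) * t_count (n - k)"
      by simp
  next
    fix i assume "i \<in> {1..n}"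
    then show "n - (n - i) = i" "n - i \<in> {..n-1}" by auto
  qed
  finally show ?thesis .
qed

lemma s0: "s_count 0 = t_count 0"
  using s_count_sum[of 0] by simp

definition Bf :: "rat fps" where "Bf = fps_X / (1 - fps_X)"

lemma Bf_rec: "Bf = fps_X + fps_X * Bf"
proof -
  have u: "(1 - fps_X :: rat fps) $ 0 \<noteq> 0" by simp
  have "Bf * (1 - fps_X) = fps_X"
    unfolding Bf_def fps_divide_unit[OF u] using inverse_mult_eq_1[OF u]
    by (metis mult.assoc mult.right_neutral)
  then show ?thesis by (simp add: algebra_simps)
qed

lemma Bf0: "Bf $ 0 = 0"
  by (subst Bf_rec) simp

definition cc :: "nat \<Rightarrow> nat \<Rightarrow> nat" where
  "cc i n = (if i = 0 then (if n = 0 then 1 else 0) else (if n = 0 then 0 else (n-1) choose (i-1)))"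

lemma Bf_pow: "(Bf ^ i) $ n = of_nat (cc i n)"
proof (induction n arbitrary: i)
  case 0
  then show ?case by (cases i) (auto simp: cc_def fps_nth_power_0 Bf0)
next
  case (Suc n)
  show ?case
  proof (cases i)
    case 0 then show ?thesis by (simp add: cc_def)
  next
    case (Suc j)
    have "Bf ^ Suc j = fps_X * Bf ^ j + fps_X * Bf ^ Suc j"
      by (subst power_Suc, subst Bf_rec) (simp add: algebra_simps)
    then have "(Bf ^ Suc j) $ Suc n = (fps_X * Bf ^ j + fps_X * Bf ^ Suc j) $ Suc n" by (rule arg_cong)
    also have "\<dots> = (Bf ^ j) $ n + (Bf ^ Suc j) $ n" by (simp only: fps_add_nth fps_X_mult_nth) simp
    also have "\<dots> = of_nat (cc j n + cc (Suc j) n)" using Suc.IH[of j] Suc.IH[of "Suc j"] by (simp del: power_Suc)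
    also have "cc j n + cc (Suc j) n = cc (Suc j) (Suc n)"
    proof (cases j)
      case 0 then show ?thesis by (cases n) (auto simp: cc_def)
    next
      case (Suc j') then show ?thesis by (cases n) (auto simp: cc_def)
    qed
    finally show ?thesis using Suc by simp
  qed
qed

lemma fps_part: "S_fps = T_fps oo (fps_X / (1 - fps_X))"
proof (rule fps_ext)
  fix n
  have "(T_fps oo Bf) $ n = (\<Sum>i=0..n. of_nat (t_count i) * of_nat (cc i n))"
    by (simp add: fps_compose_nth T_fps_def Bf_pow)
  also have "\<dots> = of_nat (s_count n)"
  proof (cases n)
    case 0 then show ?thesis by (simp add: cc_def s0)
  next
    case (Suc m)
    have "(\<Sum>i=0..n. (of_nat (t_count i) :: rat) * of_nat (cc i n))
        = (\<Sum>i=1..n. of_nat (t_count i) * of_nat (cc i n))"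
      using Suc by (simp add: sum.atLeast_Suc_atMost cc_def)
    also have "\<dots> = (\<Sum>i=1..n. of_nat (((n - 1) choose (i - 1)) * t_count i))"
      by (rule sum.cong) (auto simp: cc_def Suc)
    also have "\<dots> = of_nat (s_count n)" using s_count_binom[of n] Suc by (simp del: of_nat_mult)
    finally show ?thesis .
  qed
  finally show "S_fps $ n = (T_fps oo (fps_X / (1 - fps_X))) $ n"
    by (simp add: S_fps_def Bf_def)
qed

theorem mainTheorem2:
  shows "S_fps = T_fps oo (fps_X / (1 - fps_X))
         \<and> (\<forall>n\<ge>1. s_count n = (\<Sum>i=1..n. ((n - 1) choose (i - 1)) * t_count i))"
  using fps_part s_count_binom by blast


end
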